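(* Let $(X,U,f)$ be a robot grid search problem. Then for all $x_I,x_I'\in X$ there exists a finite action sequence $\tilde u$ such that applying $\tilde u$ from $x_I$ and from $x_I'$ ends in the same state.
   Context: A robot grid search problem: $X\subset\mathbb{Z}\times\mathbb{Z}$ finite and connected (any two points are joined by a chain in $X$ with consecutive points at distance $1$), $U=\{(-1,0),(1,0),(0,1),(0,-1)\}$, $f(x,u)=x+u$ if $x+u\in X$ and $f(x,u)=x$ otherwise. Applying $\tilde u=(u_1,\ldots,u_K)$ from $x$ yields $f(\cdots f(f(x,u_1),u_2)\cdots,u_K)$. *)

theory Defs
  imports Main
begin

type_synonym pt = "int \<times> int"

definition U :: "pt set" where
  "U = {(-1,0), (1,0), (0,1), (0,-1)}"

definition adj :: "pt \<Rightarrow> pt \<Rightarrow> bool" where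
  "adj p q \<longleftrightarrow> \<bar>fst p - fst q\<bar> + \<bar>snd p - snd q\<bar> = 1"

definition grid_connected :: "pt set \<Rightarrow> bool" where
  "grid_connected X \<longleftrightarrow> (\<forall>p\<in>X. \<forall>q\<in>X. \<exists>c. c \<noteq> [] \<and> hd c = p \<and> last c = q
      \<and> set c \<subseteq> X \<and> (\<forall>i. Suc i < length c \<longrightarrow> adj (c ! i) (c ! Suc i)))"

definition step :: "pt set \<Rightarrow> pt \<Rightarrow> pt \<Rightarrow> pt" where
  "step X x u = (let y = (fst x + fst u, snd x + snd u) in if y \<in> X then y else x)"

definition apply_seq :: "pt set \<Rightarrow> pt \<Rightarrow> pt list \<Rightarrow> pt" where
  "apply_seq X x us = foldl (step X) x us"

end

theory Submission
  imports Defs "HOL-Library.Product_Plus"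
begin

lemma step_eq: "step X x u = (if x + u \<in> X then x + u else x)"
  unfolding step_def plus_prod_def by (simp add: Let_def)

fun walk :: "pt set \<Rightarrow> pt \<Rightarrow> pt list \<Rightarrow> bool" where
  "walk X x [] = (x \<in> X)"
| "walk X x (u # us) = (x \<in> X \<and> walk X (x + u) us)"

definition sync :: "pt set \<Rightarrow> pt \<Rightarrow> pt \<Rightarrow> bool" where
  "sync X x y = (\<exists>vs. set vs \<subseteq> U \<and> apply_seq X x vs = apply_seq X y vs)"

lemma walk_in: "walk X x us \<Longrightarrow> x \<in> X"
  by (cases us) auto

lemma walk_append: "walk X x (as @ bs) = (walk X x as \<and> walk X (x + sum_list as) bs)"
  by (induction as arbitrary: x) (auto simp: add.assoc dest: walk_in)

lemma apply_walk: "walk X x us \<Longrightarrow> apply_seq X x us = x + sum_list us"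
proof (induction us arbitrary: x)
  case Nil then show ?case by (simp add: apply_seq_def)
next
  case (Cons u us)
  have "x + u \<in> X" using Cons.prems walk_in[of X "x + u" us] by simp
  then have "step X x u = x + u" by (simp add: step_eq)
  moreover have "apply_seq X (x + u) us = x + u + sum_list us" using Cons by simp
  ultimately show ?case by (simp add: apply_seq_def add.assoc)
qed

lemma apply_append: "apply_seq X x (as @ bs) = apply_seq X (apply_seq X x as) bs"
  by (simp add: apply_seq_def)

lemma sync_prefix: "set us \<subseteq> U \<Longrightarrow> sync X (apply_seq X x us) (apply_seq X y us) \<Longrightarrow> sync X x y"
  unfolding sync_def
  by (metis apply_append set_append sup.boundedI)

lemma first_block: "\<not> walk X y us \<Longrightarrow> y \<in> X \<Longrightarrow>
   \<exists>a u b. us = a @ u # b \<and> walk X y a \<and> y + sum_list a + u \<notin> X"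
proof (induction us arbitrary: y)
  case Nil then show ?case by simp
next
  case (Cons u us)
  show ?case
  proof (cases "y + u \<in> X")
    case False
    then show ?thesis using Cons.prems by (intro exI[of _ "[]"]) auto
  next
    case True
    with Cons have "\<not> walk X (y + u) us" by simp
    from Cons.IH[OF this True] obtain a v b where
      "us = a @ v # b" "walk X (y + u) a" "y + u + sum_list a + v \<notin> X" by blast
    then show ?thesis using Cons.prems
      by (intro exI[of _ "u # a"] exI[of _ v] exI[of _ b]) (auto simp: add.assoc)
  qed
qed

lemma block_case:
  assumes IH: "\<And>x' ws. length ws < length us \<Longrightarrow> set ws \<subseteq> U \<Longrightarrow> walk X x' ws
                  \<Longrightarrow> sync X x' (x' + sum_list ws)"
    and w: "walk X x us" and U: "set us \<subseteq> U"
    and nw: "\<not> walk X (x + sum_list us) us"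
  shows "sync X x (x + sum_list us)"
proof -
  define y where "y = x + sum_list us"
  have yX: "y \<in> X" using w unfolding y_def
    by (metis append_Nil2 walk.simps(1) walk_append)
  from first_block[OF nw[folded y_def] yX] obtain a u b where
    us: "us = a @ u # b" and wa: "walk X y a" and bl: "y + sum_list a + u \<notin> X" by blast
  have w1: "walk X x (a @ [u])" and w2: "walk X (x + sum_list (a @ [u])) b"
    using w us walk_append[of X x "a @ [u]" b] by auto
  have ax: "apply_seq X x (a @ [u]) = x + sum_list (a @ [u])" using apply_walk[OF w1] .
  have ay: "apply_seq X y (a @ [u]) = y + sum_list a"
    using apply_append[of X y a "[u]"] apply_walk[OF wa] bl
    by (simp add: apply_seq_def step_eq)
  define x' where "x' = x + sum_list (a @ [u])"
  have e1: "x' + sum_list b = y" unfolding x'_def y_def us by (simp add: add.assoc)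
  have wba: "walk X x' (b @ a)" using w2 wa e1 unfolding x'_def
    by (simp add: walk_append)
  have "sync X x' (x' + sum_list (b @ a))"
    by (rule IH) (use wba U us in auto)
  moreover have "x' + sum_list (b @ a) = y + sum_list a" using e1 by (simp add: add.assoc[symmetric])
  ultimately have "sync X x' (y + sum_list a)" by metis
  then have "sync X (apply_seq X x (a @ [u])) (apply_seq X y (a @ [u]))"
    using ax ay x'_def by simp
  then show ?thesis unfolding y_def[symmetric]
    by (rule sync_prefix[rotated]) (use U us in auto)
qed

lemma main:
  assumes fin: "finite X"
  shows "set us \<subseteq> U \<Longrightarrow> walk X x us \<Longrightarrow> sync X x (x + sum_list us)"
proof (induction "length us" arbitrary: us x rule: less_induct)
  case less
  define d where "d = sum_list us"
  show ?case
  proof (rule ccontr)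
    assume ns: "\<not> sync X x (x + sum_list us)"
    have d0: "d \<noteq> 0"
    proof
      assume "d = 0" then have "sync X x (x + sum_list us)"
        unfolding sync_def d_def by (intro exI[of _ "[]"]) simp
      with ns show False by simp
    qed
    define z where "z k = (fst x + int k * fst d, snd x + int k * snd d)" for k :: nat
    have zS: "z (Suc k) = z k + d" for k unfolding z_def by (simp add: prod_eq_iff algebra_simps)
    have z0: "z 0 = x" unfolding z_def by simp
    have bc: "sync X x' (x' + sum_list us)" if "walk X x' us" "\<not> walk X (x' + sum_list us) us" for x'
      by (rule block_case[OF _ that(1) less.prems(1) that(2)]) (rule less.hyps; simp)
    have inv: "walk X (z k) us \<and> \<not> sync X (z k) (z (Suc k))" for k
    proof (induction k)
      case 0 then show ?case using less.prems ns z0 zS d_def by simp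
    next
      case (Suc k)
      have wk: "walk X (z k) us" and nk: "\<not> sync X (z k) (z (Suc k))" using Suc by auto
      have w': "walk X (z (Suc k)) us"
        using bc[OF wk] nk zS d_def by auto
      have "\<not> sync X (z (Suc k)) (z (Suc (Suc k)))"
      proof
        assume s: "sync X (z (Suc k)) (z (Suc (Suc k)))"
        have "apply_seq X (z k) us = z (Suc k)" using apply_walk[OF wk] zS d_def by simp
        moreover have "apply_seq X (z (Suc k)) us = z (Suc (Suc k))"
          using apply_walk[OF w'] zS d_def by simp
        ultimately have "sync X (z k) (z (Suc k))"
          using sync_prefix[OF less.prems(1), of X "z k" "z (Suc k)"] s by simp
        with nk show False by simp
      qed
      with w' show ?case by simp
    qed
    have "range z \<subseteq> X" using inv walk_in by blast
    moreover have "inj z"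
    proof (rule injI)
      fix k m assume "z k = z m"
      then have "int k * fst d = int m * fst d" "int k * snd d = int m * snd d"
        unfolding z_def by auto
      then show "k = m" using d0 by (metis mult_cancel_right of_nat_eq_iff prod_eqI fst_zero snd_zero)
    qed
    ultimately show False using fin by (meson finite_subset finite_imageD infinite_UNIV_nat)
  qed
qed

lemma adj_U: "adj a b \<Longrightarrow> b - a \<in> U"
  unfolding adj_def U_def by (cases a, cases b) (auto simp: abs_if split: if_splits)

lemma chain_walk: "c \<noteq> [] \<Longrightarrow> set c \<subseteq> X \<Longrightarrow> (\<forall>i. Suc i < length c \<longrightarrow> adj (c ! i) (c ! Suc i))
  \<Longrightarrow> \<exists>us. set us \<subseteq> U \<and> walk X (hd c) us \<and> hd c + sum_list us = last c"
proof (induction c)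
  case Nil then show ?case by simp
next
  case (Cons a c)
  show ?case
  proof (cases c)
    case Nil then show ?thesis using Cons by (intro exI[of _ "[]"]) auto
  next
    case (Cons b c')
    have "\<forall>i. Suc i < length c \<longrightarrow> adj (c ! i) (c ! Suc i)"
      using Cons.prems(3) by (metis Suc_less_eq length_Cons nth_Cons_Suc)
    then obtain us where us: "set us \<subseteq> U" "walk X b us" "b + sum_list us = last c"
      using Cons.IH Cons.prems Cons by auto
    have "adj a b" using Cons.prems(3) Cons by (metis length_Cons nth_Cons_0 nth_Cons_Suc zero_less_Suc Suc_less_eq)
    then have u: "b - a \<in> U" by (rule adj_U)
    show ?thesis using us u Cons.prems Cons
      by (intro exI[of _ "(b - a) # us"]) (auto simp: algebra_simps)
  qed
qed

theorem lemma2: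
  fixes X :: "(int \<times> int) set"
  assumes "finite X" and "grid_connected X"
    and "xI \<in> X" and "xI' \<in> X"
  shows "\<exists>us. set us \<subseteq> U \<and> apply_seq X xI us = apply_seq X xI' us"
proof -
  obtain c where c: "c \<noteq> []" "hd c = xI" "last c = xI'" "set c \<subseteq> X"
    "\<forall>i. Suc i < length c \<longrightarrow> adj (c ! i) (c ! Suc i)"
    using assms(2-4) unfolding grid_connected_def by blast
  then obtain us where "set us \<subseteq> U" "walk X xI us" "xI + sum_list us = xI'"
    using chain_walk by blast
  then have "sync X xI xI'" using main[OF assms(1)] by metis
  then show ?thesis unfolding sync_def .
qed

end
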